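(* Let $\Gamma:\mathbb{C}^4\to\mathbb{C}^4$ be a homogeneous polynomial map such that $(x,\Gamma(x))=0$ and $(\Gamma(x),\Gamma(x))=0$ for all $x\in C$. Then there is one of the two generating families $\mathcal P$ of planes in $C$ such that for every nonzero $x\in C$, the vector $\Gamma(x)$ lies in the unique plane of $\mathcal P$ containing $x$.
   Context: $(\cdot,\cdot)$ is the standard Euclidean inner product on $\mathbb{R}^4$ extended complex-bilinearly to $\mathbb{C}^4$, and $C=\{x\in\mathbb{C}^4:(x,x)=0\}$ is the asymptotic cone. The 2-dimensional complex linear subspaces ("planes") contained in $C$ form two families, the *generating families of planes*: every nonzero $x\in C$ lies in exactly one plane of each family (these correspond to the two rulings of lines of the quadric surface $\mathbb{P}(C)\subset\mathbb{CP}^3$). *)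

theory Defs
  imports "HOL-Analysis.Analysis"
begin

definition cbil :: "complex^4 \<Rightarrow> complex^4 \<Rightarrow> complex" where
  "cbil x y = (\<Sum>i\<in>UNIV. x$i * y$i)"

definition asym_cone :: "(complex^4) set" where
  "asym_cone = {x. cbil x x = 0}"

definition hom_poly_fun :: "nat \<Rightarrow> (complex^4 \<Rightarrow> complex) \<Rightarrow> bool" where
  "hom_poly_fun d f \<longleftrightarrow>
     (\<exists>(M :: (4 \<Rightarrow> nat) set) (c :: (4 \<Rightarrow> nat) \<Rightarrow> complex).
        finite M \<and> (\<forall>\<alpha>\<in>M. (\<Sum>i\<in>UNIV. \<alpha> i) = d) \<and>
        (\<forall>x. f x = (\<Sum>\<alpha>\<in>M. c \<alpha> * (\<Prod>i\<in>UNIV. (x$i) ^ \<alpha> i))))"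

definition hom_poly_map :: "(complex^4 \<Rightarrow> complex^4) \<Rightarrow> bool" where
  "hom_poly_map \<Gamma> \<longleftrightarrow> (\<exists>d. \<forall>i. hom_poly_fun d (\<lambda>x. \<Gamma> x $ i))"

definition cone_plane :: "(complex^4) set \<Rightarrow> bool" where
  "cone_plane P \<longleftrightarrow> vec.subspace P \<and> vec.dim P = 2 \<and> P \<subseteq> asym_cone"

text \<open>A generating family (ruling): the class of a plane under the relation
  "equal or meeting only in 0" (planes of the same family are skew).\<close>
definition generating_family :: "(complex^4) set set \<Rightarrow> bool" where
  "generating_family \<F> \<longleftrightarrow>
     (\<exists>P0. cone_plane P0 \<and> \<F> = {P. cone_plane P \<and> (P = P0 \<or> P \<inter> P0 = {0})})"

end

theory Submission
  imports Defs "HOL-Complex_Analysis.Conformal_Mappings"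
begin


lemma alg_main:
  fixes pa pb pc pd qa qb qc qd s0 t0 na nb nc nd :: complex
  assumes hp: "pa*pd = pb*pc" and hq: "qa*qd = qb*qc" and hpq: "(pa+qa)*(pd+qd) = (pb+qb)*(pc+qc)"
    and ind: "\<And>s t. s*pc + t*qc = 0 \<Longrightarrow> s*pd + t*qd = 0 \<Longrightarrow> s = 0 \<and> t = 0"
    and nz: "\<not>(s0*pa+t0*qa = 0 \<and> s0*pb+t0*qb = 0 \<and> s0*pc+t0*qc = 0 \<and> s0*pd+t0*qd = 0)"
    and c1: "(s0*pa+t0*qa)*nc = (s0*pc+t0*qc)*na"
    and c2: "(s0*pa+t0*qa)*nd = (s0*pc+t0*qc)*nb"
    and c3: "(s0*pb+t0*qb)*nc = (s0*pd+t0*qd)*na"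
    and c4: "(s0*pb+t0*qb)*nd = (s0*pd+t0*qd)*nb"
  shows "\<exists>s t. na = s*pa + t*qa \<and> nb = s*pb+t*qb \<and> nc = s*pc+t*qc \<and> nd = s*pd+t*qd"
proof -
  define Dt where "Dt = pc*qd - pd*qc"
  have D: "Dt \<noteq> 0"
  proof
    assume D0: "Dt = 0"
    have "qc = 0 \<and> pc = 0" using ind[of qc "-pc"] D0 unfolding Dt_def by (auto simp: algebra_simps)
    moreover have "qd = 0 \<and> pd = 0" using ind[of qd "-pd"] D0 unfolding Dt_def by (auto simp: algebra_simps)
    ultimately show False using ind[of 1 0] by simp
  qed
  obtain l1 where l1: "pa = l1*pc" "pb = l1*pd"
  proof (cases "pc = 0")
    case True
    then have "pd \<noteq> 0" using D Dt_def by auto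
    then show ?thesis using that[of "pb/pd"] hp True by (auto simp: field_simps)
  next
    case False
    then show ?thesis using that[of "pa/pc"] hp by (auto simp: field_simps)
  qed
  obtain l2 where l2: "qa = l2*qc" "qb = l2*qd"
  proof (cases "qc = 0")
    case True
    then have "qd \<noteq> 0" using D Dt_def by auto
    then show ?thesis using that[of "qb/qd"] hq True by (auto simp: field_simps)
  next
    case False
    then show ?thesis using that[of "qa/qc"] hq by (auto simp: field_simps)
  qed
  have "(l1 - l2) * Dt = 0" using hpq hp hq unfolding l1 l2 Dt_def by algebra
  then have l12: "l1 = l2" using D by simp
  define xc where "xc = s0*pc+t0*qc"
  define xd where "xd = s0*pd+t0*qd"
  have xa: "s0*pa+t0*qa = l1*xc" and xb: "s0*pb+t0*qb = l1*xd"
    unfolding xc_def xd_def l1 l2 l12 by (simp_all add: algebra_simps)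
  have xnz: "xc \<noteq> 0 \<or> xd \<noteq> 0" using nz xa xb xc_def xd_def by auto
  have e1: "xc * (l1*nc - na) = 0" using c1[unfolded xa xc_def[symmetric]] by algebra
  have e2: "xc * (l1*nd - nb) = 0" using c2[unfolded xa xc_def[symmetric]] by algebra
  have e3: "xd * (l1*nc - na) = 0" using c3[unfolded xb xd_def[symmetric]] by algebra
  have e4: "xd * (l1*nd - nb) = 0" using c4[unfolded xb xd_def[symmetric]] by algebra
  have na: "na = l1*nc" and nb: "nb = l1*nd" using xnz e1 e2 e3 e4 by auto
  define s where "s = (nc*qd - nd*qc)/Dt"
  define t where "t = (pc*nd - pd*nc)/Dt"
  have "s*pc+t*qc = ((nc*qd - nd*qc)*pc + (pc*nd - pd*nc)*qc)/Dt"
    unfolding s_def t_def by (simp add: add_divide_distrib)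
  also have "(nc*qd - nd*qc)*pc + (pc*nd - pd*nc)*qc = nc*Dt" unfolding Dt_def by algebra
  finally have sc: "nc = s*pc+t*qc" using D by simp
  have "s*pd+t*qd = ((nc*qd - nd*qc)*pd + (pc*nd - pd*nc)*qd)/Dt"
    unfolding s_def t_def by (simp add: add_divide_distrib)
  also have "(nc*qd - nd*qc)*pd + (pc*nd - pd*nc)*qd = nd*Dt" unfolding Dt_def by algebra
  finally have sd: "nd = s*pd+t*qd" using D by simp
  show ?thesis
    apply (rule exI[of _ s], rule exI[of _ t])
    using sc sd na nb l1 l2 l12 by (simp add: algebra_simps)
qed


lemma span2: "vec.span {p, q} = {s *s p + t *s q | s t. True}"
proof -
  have "vec.span {p,q} = {x. \<exists>k ka. x - k *s p = ka *s q}"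
    by (simp add: vec.span_insert vec.span_singleton)
  also have "\<dots> = {s *s p + t *s q | s t. True}"
    proof (rule set_eqI)
    fix x
    show "x \<in> {x. \<exists>k ka. x - k *s p = ka *s q} \<longleftrightarrow> x \<in> {s *s p + t *s q | s t. True}"
    proof
      assume "x \<in> {x. \<exists>k ka. x - k *s p = ka *s q}"
      then obtain k ka where "x - k *s p = ka *s q" by blast
      then have "x = k *s p + ka *s q" by (simp add: diff_eq_eq add.commute)
      then show "x \<in> {s *s p + t *s q | s t. True}" by blast
    next
      assume "x \<in> {s *s p + t *s q | s t. True}"
      then obtain s t where "x = s *s p + t *s q" by blast
      then have "x - s *s p = t *s q" by simp
      then show "x \<in> {x. \<exists>k ka. x - k *s p = ka *s q}" by blast
    qed
  qed
  finally show ?thesis .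
qed

lemma indep2:
  fixes p q :: "complex^4"
  assumes "p \<noteq> q"
  shows "vec.independent {p,q} \<longleftrightarrow> (\<forall>s t. s *s p + t *s q = 0 \<longrightarrow> s = 0 \<and> t = 0)"
proof
  assume ind: "vec.independent {p,q}"
  have "vec.independent {q}" and pn0: "p \<notin> vec.span {q}"
    using ind assms by (simp_all add: vec.independent_insert)
  then have q0: "q \<noteq> 0" and pn: "\<And>k. p \<noteq> k *s q"
    using vec.span_singleton[of q] by auto
  show "\<forall>s t. s *s p + t *s q = 0 \<longrightarrow> s = 0 \<and> t = 0"
  proof (intro allI impI)
    fix s t :: complex assume st: "s *s p + t *s q = 0"
    show "s = 0 \<and> t = 0"
    proof (cases "s = 0")
      case True
      then have "t *s q = 0" using st by simp
      then show ?thesis using True q0 by simp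
    next
      case False
      have sp: "s *s p = (-t) *s q" using st
        by (simp add: eq_neg_iff_add_eq_0)
      have "p = (1/s) *s (s *s p)" using False by (simp add: vector_smult_assoc)
      also have "\<dots> = ((-t)/s) *s q" unfolding sp by (simp add: vector_smult_assoc)
      finally show ?thesis using pn by blast
    qed
  qed
next
  assume h: "\<forall>s t. s *s p + t *s q = 0 \<longrightarrow> s = 0 \<and> t = 0"
  have q0: "q \<noteq> 0" using h[rule_format, of 0 1] by auto
  have pn: "p \<notin> vec.span {q}"
  proof
    assume "p \<in> vec.span {q}"
    then obtain k where "p = k *s q" using vec.span_singleton[of q] by auto
    then have "1 *s p + (-k) *s q = 0" by simp
    then show False using h[rule_format, of 1 "-k"] by simp
  qed
  show "vec.independent {p,q}"
    using assms q0 pn by (simp add: vec.independent_insert)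
qed

lemma family_from_col:
  fixes A B C D :: "complex^4 \<Rightarrow> complex" and X :: "complex \<Rightarrow> complex \<Rightarrow> complex \<Rightarrow> complex \<Rightarrow> complex^4"
    and \<Gamma> :: "complex^4 \<Rightarrow> complex^4"
  assumes linA: "\<And>x y. A (x+y) = A x + A y" "\<And>c x. A (c *s x) = c * A x"
    and linB: "\<And>x y. B (x+y) = B x + B y" "\<And>c x. B (c *s x) = c * B x"
    and linC: "\<And>x y. C (x+y) = C x + C y" "\<And>c x. C (c *s x) = c * C x"
    and linD: "\<And>x y. D (x+y) = D x + D y" "\<And>c x. D (c *s x) = c * D x"
    and XA: "\<And>a b c d. A (X a b c d) = a" and XB: "\<And>a b c d. B (X a b c d) = b"
    and XC: "\<And>a b c d. C (X a b c d) = c" and XD: "\<And>a b c d. D (X a b c d) = d"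
    and inj: "\<And>y z. A y = A z \<Longrightarrow> B y = B z \<Longrightarrow> C y = C z \<Longrightarrow> D y = D z \<Longrightarrow> y = z"
    and cone: "\<And>x. x \<in> asym_cone \<longleftrightarrow> A x * D x = B x * C x"
    and col: "\<And>x. x \<in> asym_cone \<Longrightarrow> A x * C (\<Gamma> x) = C x * A (\<Gamma> x) \<and> A x * D (\<Gamma> x) = C x * B (\<Gamma> x)
               \<and> B x * C (\<Gamma> x) = D x * A (\<Gamma> x) \<and> B x * D (\<Gamma> x) = D x * B (\<Gamma> x)"
  shows "\<exists>\<F>. generating_family \<F> \<and>
           (\<forall>x\<in>asym_cone. x \<noteq> 0 \<longrightarrow> (\<forall>P\<in>\<F>. x \<in> P \<longrightarrow> \<Gamma> x \<in> P))"
proof -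
  have A0: "A 0 = 0" using linA(2)[of 0 0] by simp
  have B0: "B 0 = 0" using linB(2)[of 0 0] by simp
  have C0: "C 0 = 0" using linC(2)[of 0 0] by simp
  have D0: "D 0 = 0" using linD(2)[of 0 0] by simp
  have zero: "\<And>x. x = 0 \<longleftrightarrow> A x = 0 \<and> B x = 0 \<and> C x = 0 \<and> D x = 0"
    using inj[of _ 0] A0 B0 C0 D0 by metis
  have lc: "\<And>s t p q. A (s *s p + t *s q) = s * A p + t * A q \<and> B (s *s p + t *s q) = s * B p + t * B q
     \<and> C (s *s p + t *s q) = s * C p + t * C q \<and> D (s *s p + t *s q) = s * D p + t * D q"
    by (simp add: linA linB linC linD)
  define P0 where "P0 = {x. C x = 0 \<and> D x = 0}"
  define p where "p = X 1 0 0 0"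
  define q where "q = X 0 1 0 0"
  have pq: "p \<noteq> q" using XA[of 1 0 0 0] XA[of 0 1 0 0] unfolding p_def q_def by force
  have P0eq: "P0 = vec.span {p,q}"
  proof -
    have "P0 = {s *s p + t *s q | s t. True}"
    proof (rule set_eqI, rule iffI)
      fix x assume "x \<in> P0"
      then have "x = A x *s p + B x *s q"
        by (intro inj) (auto simp: lc p_def q_def XA XB XC XD P0_def)
      then show "x \<in> {s *s p + t *s q | s t. True}" by blast
    next
      fix x assume "x \<in> {s *s p + t *s q | s t. True}"
      then show "x \<in> P0" by (auto simp: lc p_def q_def XA XB XC XD P0_def)
    qed
    then show ?thesis by (simp add: span2)
  qed
  have indpq: "vec.independent {p,q}"
    unfolding indep2[OF pq]
  proof (intro allI impI)
    fix s t assume "s *s p + t *s q = 0"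
    then have "A (s *s p + t *s q) = 0" "B (s *s p + t *s q) = 0" using zero by blast+
    then have "s * A p + t * A q = 0" "s * B p + t * B q = 0" using lc[of s p t q] by simp_all
    then show "s = 0 \<and> t = 0" by (simp add: p_def q_def XA XB)
  qed
  have cP0: "cone_plane P0"
    unfolding cone_plane_def
  proof (intro conjI)
    show "vec.subspace P0" unfolding P0eq by (rule vec.subspace_span)
    show "vec.dim P0 = 2" unfolding P0eq using indpq pq
      by (simp add: vec.dim_eq_card_independent)
    show "P0 \<subseteq> asym_cone" by (auto simp: P0_def cone)
  qed
  define F where "F = {P. cone_plane P \<and> (P = P0 \<or> P \<inter> P0 = {0})}"
  have gF: "generating_family F" unfolding generating_family_def F_def using cP0 by blast
  have main: "\<Gamma> x \<in> P" if xC: "x \<in> asym_cone" and xnz: "x \<noteq> 0" and PF: "P \<in> F" and xP: "x \<in> P" for x P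
  proof -
    have cP: "cone_plane P" and PP: "P = P0 \<or> P \<inter> P0 = {0}" using PF by (auto simp: F_def)
    note cl = col[OF xC]
    show ?thesis using PP
    proof
      assume PP0: "P = P0"
      then have "C x = 0" "D x = 0" using xP by (auto simp: P0_def)
      moreover have "A x \<noteq> 0 \<or> B x \<noteq> 0" using xnz zero calculation by blast
      ultimately have "C (\<Gamma> x) = 0 \<and> D (\<Gamma> x) = 0" using cl by auto
      then show ?thesis using PP0 by (simp add: P0_def)
    next
      assume int: "P \<inter> P0 = {0}"
      have sP: "vec.subspace P" and dP: "vec.dim P = 2" and PC: "P \<subseteq> asym_cone"
        using cP by (auto simp: cone_plane_def)
      obtain Bs where Bs: "Bs \<subseteq> P" "vec.independent Bs" "P \<subseteq> vec.span Bs" "card Bs = vec.dim P"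
        using vec.basis_exists by blast
      obtain p' q' where Bpq: "Bs = {p', q'}" "p' \<noteq> q'" using Bs(4) dP by (auto simp: card_2_iff)
      have Peq: "P = vec.span {p',q'}" using vec.span_subspace[OF Bs(1) Bs(3) sP] Bpq by simp
      have Pset: "P = {s *s p' + t *s q' | s t. True}" using Peq span2 by simp
      have indP: "\<And>s t. s *s p' + t *s q' = 0 \<Longrightarrow> s = 0 \<and> t = 0"
        using Bs(2) Bpq indep2 by blast
      have inP: "\<And>s t. s *s p' + t *s q' \<in> P" using Pset by blast
      have inC: "\<And>s t. s *s p' + t *s q' \<in> asym_cone" using inP PC by blast
      have hp: "A p' * D p' = B p' * C p'" using inC[of 1 0] cone[of "1 *s p' + 0 *s q'"] lc[of 1 p' 0 q'] by simp
      have hq: "A q' * D q' = B q' * C q'" using inC[of 0 1] cone[of "0 *s p' + 1 *s q'"] lc[of 0 p' 1 q'] by simp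
      have hpq: "(A p' + A q') * (D p' + D q') = (B p' + B q') * (C p' + C q')"
        using inC[of 1 1] cone[of "1 *s p' + 1 *s q'"] lc[of 1 p' 1 q'] by simp
      have ind: "s = 0 \<and> t = 0" if "s * C p' + t * C q' = 0" "s * D p' + t * D q' = 0" for s t
      proof -
        have "s *s p' + t *s q' \<in> P0" using that lc by (simp add: P0_def)
        then have "s *s p' + t *s q' = 0" using int inP by blast
        then show ?thesis using indP by blast
      qed
      obtain s0 t0 where x: "x = s0 *s p' + t0 *s q'" using xP Pset by blast
      have nz: "\<not>(s0*A p'+t0*A q' = 0 \<and> s0*B p'+t0*B q' = 0 \<and> s0*C p'+t0*C q' = 0 \<and> s0*D p'+t0*D q' = 0)"
        using xnz zero[of x] lc[of s0 p' t0 q'] unfolding x by simp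
      have cl': "(s0*A p'+t0*A q') * C (\<Gamma> x) = (s0*C p'+t0*C q') * A (\<Gamma> x)"
          "(s0*A p'+t0*A q') * D (\<Gamma> x) = (s0*C p'+t0*C q') * B (\<Gamma> x)"
          "(s0*B p'+t0*B q') * C (\<Gamma> x) = (s0*D p'+t0*D q') * A (\<Gamma> x)"
          "(s0*B p'+t0*B q') * D (\<Gamma> x) = (s0*D p'+t0*D q') * B (\<Gamma> x)"
        using cl lc[of s0 p' t0 q'] unfolding x by simp_all
      obtain s t where st: "A (\<Gamma> x) = s * A p' + t * A q'" "B (\<Gamma> x) = s * B p' + t * B q'"
          "C (\<Gamma> x) = s * C p' + t * C q'" "D (\<Gamma> x) = s * D p' + t * D q'"
        using alg_main[OF hp hq hpq ind nz cl'] by blast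
      have "\<Gamma> x = s *s p' + t *s q'" by (rule inj) (simp_all add: lc st)
      then show ?thesis using inP by simp
    qed
  qed
  show ?thesis using gF main by blast
qed



definition lin :: "complex^4 \<Rightarrow> complex^4 \<Rightarrow> complex \<Rightarrow> complex^4" where
  "lin a y t = a + t *s (y - a)"

definition hl :: "(complex^4 \<Rightarrow> complex) \<Rightarrow> bool" where
  "hl f \<longleftrightarrow> (\<forall>a y. (\<lambda>t. f (lin a y t)) holomorphic_on UNIV)"

lemma hl_const: "hl (\<lambda>w. c)" by (simp add: hl_def)
lemma hl_coord: "hl (\<lambda>w. w $ k)" unfolding hl_def lin_def by (simp add: holomorphic_intros)
lemma hl_add: "hl f \<Longrightarrow> hl g \<Longrightarrow> hl (\<lambda>w. f w + g w)"
  unfolding hl_def by (simp add: holomorphic_on_add)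
lemma hl_diff: "hl f \<Longrightarrow> hl g \<Longrightarrow> hl (\<lambda>w. f w - g w)"
  unfolding hl_def by (simp add: holomorphic_on_diff)
lemma hl_mult: "hl f \<Longrightarrow> hl g \<Longrightarrow> hl (\<lambda>w. f w * g w)"
  unfolding hl_def by (simp add: holomorphic_on_mult)
lemma hl_divc: "hl f \<Longrightarrow> hl (\<lambda>w. f w / c)"
  unfolding hl_def by (simp add: holomorphic_on_divide holomorphic_intros)
lemma hl_minus: "hl f \<Longrightarrow> hl (\<lambda>w. - f w)"
  unfolding hl_def by (simp add: holomorphic_on_minus)
lemma hl_power: "hl f \<Longrightarrow> hl (\<lambda>w. f w ^ n)"
  unfolding hl_def by (simp add: holomorphic_on_power)
lemma hl_sum: "(\<And>i. i \<in> I \<Longrightarrow> hl (f i)) \<Longrightarrow> hl (\<lambda>w. \<Sum>i\<in>I. f i w)"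
  unfolding hl_def by (auto intro!: holomorphic_on_sum)
lemma hl_prod: "(\<And>i. i \<in> I \<Longrightarrow> hl (f i)) \<Longrightarrow> hl (\<lambda>w. \<Prod>i\<in>I. f i w)"
  unfolding hl_def by (auto intro!: holomorphic_on_prod)

lemma hl_poly:
  assumes "hom_poly_fun d p" and "\<And>k. hl (\<lambda>w. h w $ k)"
  shows "hl (\<lambda>w. p (h w))"
proof -
  obtain M c where pe: "\<forall>x. p x = (\<Sum>\<alpha>\<in>M. c \<alpha> * (\<Prod>i\<in>UNIV. (x$i) ^ \<alpha> i))"
    using assms(1) unfolding hom_poly_fun_def by blast
  have "hl (\<lambda>w. \<Sum>\<alpha>\<in>M. c \<alpha> * (\<Prod>i\<in>UNIV. (h w $ i) ^ \<alpha> i))"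
    by (intro hl_sum hl_mult hl_const hl_prod hl_power assms(2))
  then show ?thesis using pe by simp
qed

lemma zero_or:
  assumes hf: "hl f" and hg: "hl g" and fg: "\<And>w. f w = 0 \<or> g w = 0"
  shows "(\<forall>w. f w = 0) \<or> (\<forall>w. g w = 0)"
proof (rule ccontr)
  assume "\<not> ?thesis"
  then obtain a y where fa: "f a \<noteq> 0" and gy: "g y \<noteq> 0" by auto
  define F where "F t = f (lin a y t)" for t
  define G where "G t = g (lin a y t)" for t
  have hF: "F holomorphic_on UNIV" using hf unfolding hl_def F_def by blast
  have hG: "G holomorphic_on UNIV" using hg unfolding hl_def G_def by blast
  have "continuous (at 0) F"
    using holomorphic_on_imp_continuous_on[OF hF] by (simp add: continuous_on_eq_continuous_at)
  moreover have "F 0 \<noteq> 0" using fa by (simp add: F_def lin_def)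
  ultimately obtain r where r: "r > 0" "\<And>t. dist 0 t < r \<Longrightarrow> F t \<noteq> 0"
    using continuous_at_avoid by metis
  have G0: "G t = 0" if "t \<in> ball 0 r" for t
    using r(2)[of t] that fg[of "lin a y t"] by (auto simp: F_def G_def)
  have "G 1 = 0"
    using analytic_continuation[of G UNIV "ball 0 r" 0 1] hG G0 r(1) connected_UNIV by (simp add: islimpt_ball)
  moreover have "G 1 = g y" by (simp add: G_def lin_def)
  ultimately show False using gy by simp
qed

lemma zero_or_idx:
  assumes "\<And>i. i \<in> I \<Longrightarrow> hl (F i)" "\<And>j. j \<in> J \<Longrightarrow> hl (G j)"
    and "\<And>w. (\<forall>i\<in>I. F i w = 0) \<or> (\<forall>j\<in>J. G j w = 0)"
  shows "(\<forall>i\<in>I. \<forall>w. F i w = 0) \<or> (\<forall>j\<in>J. \<forall>w. G j w = 0)"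
proof (rule ccontr)
  assume "\<not> ?thesis"
  then obtain i j w1 w2 where ij: "i \<in> I" "j \<in> J" "F i w1 \<noteq> 0" "G j w2 \<noteq> 0" by auto
  have "(\<forall>w. F i w = 0) \<or> (\<forall>w. G j w = 0)"
    using zero_or[OF assms(1)[OF ij(1)] assms(2)[OF ij(2)]] assms(3) ij(1,2) by blast
  then show False using ij by blast
qed



definition cA :: "complex^4 \<Rightarrow> complex" where "cA x = x$1 + \<i> * x$2"
definition cB :: "complex^4 \<Rightarrow> complex" where "cB x = -(x$3 + \<i> * x$4)"
definition cC :: "complex^4 \<Rightarrow> complex" where "cC x = x$3 - \<i> * x$4"
definition cD :: "complex^4 \<Rightarrow> complex" where "cD x = x$1 - \<i> * x$2"

definition xm :: "complex \<Rightarrow> complex \<Rightarrow> complex \<Rightarrow> complex \<Rightarrow> complex^4" where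
 "xm a b c d = (\<chi> i. if i = 1 then (a+d)/2 else if i = 2 then -\<i>*(a-d)/2 else if i = 3 then (c-b)/2 else \<i>*(b+c)/2)"

lemma xm_comp: "xm a b c d $ 1 = (a+d)/2" "xm a b c d $ 2 = -\<i>*(a-d)/2" "xm a b c d $ 3 = (c-b)/2" "xm a b c d $ 4 = \<i>*(b+c)/2"
  by (simp_all add: xm_def)

lemma ii: "\<i> * (\<i> * z) = - z" by (simp add: mult.assoc[symmetric])

lemma xm_coords: "cA (xm a b c d) = a" "cB (xm a b c d) = b" "cC (xm a b c d) = c" "cD (xm a b c d) = d"
  by (simp_all add: cA_def cB_def cC_def cD_def xm_comp field_simps ii)

lemma xm_inv: "xm (cA y) (cB y) (cC y) (cD y) = y"
  by (simp add: vec_eq_iff forall_4 xm_comp cA_def cB_def cC_def cD_def field_simps ii)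

lemma c_inj: "cA y = cA z \<Longrightarrow> cB y = cB z \<Longrightarrow> cC y = cC z \<Longrightarrow> cD y = cD z \<Longrightarrow> y = z"
  by (metis xm_inv)

lemma c_lin:
  "cA (x+y) = cA x + cA y" "cA (c *s x) = c * cA x"
  "cB (x+y) = cB x + cB y" "cB (c *s x) = c * cB x"
  "cC (x+y) = cC x + cC y" "cC (c *s x) = c * cC x"
  "cD (x+y) = cD x + cD y" "cD (c *s x) = c * cD x"
  by (simp_all add: cA_def cB_def cC_def cD_def algebra_simps)

lemma cbil_coords: "cbil x y = (cA x * cD y + cD x * cA y - cB x * cC y - cC x * cB y)/2"
  by (simp add: cbil_def sum_4 cA_def cB_def cC_def cD_def field_simps ii)

lemma cone_iff: "x \<in> asym_cone \<longleftrightarrow> cA x * cD x = cB x * cC x"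
proof -
  have "x \<in> asym_cone \<longleftrightarrow> (cA x * cD x + cD x * cA x - cB x * cC x - cC x * cB x)/2 = 0"
    by (simp add: asym_cone_def cbil_coords[of x x])
  also have "\<dots> \<longleftrightarrow> cA x * cD x = cB x * cC x" by (simp add: field_simps)
  finally show ?thesis .
qed

lemma prods:
  fixes a b c d e f g h :: complex
  assumes "a*d = b*c" "e*h = f*g" "a*h + d*e - b*g - c*f = 0"
  shows "(a*g - c*e) * (a*f - b*e) = 0" "(a*g - c*e) * (a*h - b*g) = 0"
   "(a*g - c*e) * (c*f - d*e) = 0" "(a*g - c*e) * (c*h - d*g) = 0"
   "(a*h - c*f) * (a*f - b*e) = 0" "(a*h - c*f) * (a*h - b*g) = 0"
   "(a*h - c*f) * (c*f - d*e) = 0" "(a*h - c*f) * (c*h - d*g) = 0"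
   "(b*g - d*e) * (a*f - b*e) = 0" "(b*g - d*e) * (a*h - b*g) = 0"
   "(b*g - d*e) * (c*f - d*e) = 0" "(b*g - d*e) * (c*h - d*g) = 0"
   "(b*h - d*f) * (a*f - b*e) = 0" "(b*h - d*f) * (a*h - b*g) = 0"
   "(b*h - d*f) * (c*f - d*e) = 0" "(b*h - d*f) * (c*h - d*g) = 0"
  using assms by algebra+

lemma pw:
  fixes a b c d e f g h :: complex
  assumes "a*d = b*c" "e*h = f*g" "a*h + d*e - b*g - c*f = 0"
  shows "(a*g - c*e = 0 \<and> a*h - c*f = 0 \<and> b*g - d*e = 0 \<and> b*h - d*f = 0) \<or>
         (a*f - b*e = 0 \<and> a*h - b*g = 0 \<and> c*f - d*e = 0 \<and> c*h - d*g = 0)"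
  using prods[OF assms] by (simp only: mult_eq_0_iff) blast


definition mk4 :: "complex \<Rightarrow> complex \<Rightarrow> complex \<Rightarrow> complex \<Rightarrow> complex^4" where
  "mk4 u1 u2 v1 v2 = (\<chi> i. if i = 1 then u1 else if i = 2 then u2 else if i = 3 then v1 else v2)"

lemma mk4_comp: "mk4 u1 u2 v1 v2 $ 1 = u1" "mk4 u1 u2 v1 v2 $ 2 = u2" "mk4 u1 u2 v1 v2 $ 3 = v1" "mk4 u1 u2 v1 v2 $ 4 = v2"
  by (simp_all add: mk4_def)

definition phi :: "complex^4 \<Rightarrow> complex^4" where
  "phi w = xm (w$1 * w$3) (w$1 * w$4) (w$2 * w$3) (w$2 * w$4)"

lemma phi_surj:
  assumes "x \<in> asym_cone" shows "\<exists>w. phi w = x"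
proof -
  define a where "a = cA x" define b where "b = cB x" define c where "c = cC x" define d where "d = cD x"
  have adbc: "a*d = b*c" using assms cone_iff a_def b_def c_def d_def by simp
  have xe: "x = xm a b c d" using xm_inv a_def b_def c_def d_def by simp
  show ?thesis
  proof (cases "a = 0")
    case False
    have "c*b/a = (b*c)/a" by (simp add: mult.commute)
    also have "\<dots> = (a*d)/a" using adbc by simp
    also have "\<dots> = d" using False by simp
    finally have cd: "c*b/a = d" .
    have "phi (mk4 a c 1 (b/a)) = xm a b c d"
      using False by (simp add: phi_def mk4_comp cd)
    then show ?thesis using xe by blast
  next
    case a0: True
    show ?thesis
    proof (cases "b = 0")
      case False
      then have "c = 0" using a0 adbc by simp
      then have "phi (mk4 b d 0 1) = xm a b c d" using a0 by (simp add: phi_def mk4_comp)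
      then show ?thesis using xe by blast
    next
      case True
      then have "phi (mk4 0 1 c d) = xm a b c d" using a0 by (simp add: phi_def mk4_comp)
      then show ?thesis using xe by blast
    qed
  qed
qed

lemma phi_cone: "phi w \<in> asym_cone"
  by (simp add: cone_iff phi_def xm_coords)

lemma hl_if: "hl f \<Longrightarrow> hl g \<Longrightarrow> hl (\<lambda>w. if P then f w else g w)"
  by (cases P) simp_all

lemma hl_phi: "hl (\<lambda>w. phi w $ k)"
  unfolding phi_def xm_def vec_lambda_beta
  by (intro hl_if hl_divc hl_add hl_diff hl_mult hl_minus hl_const hl_coord)

lemma hl_coords:
  assumes "\<And>k. hl (\<lambda>w. h w $ k)"
  shows "hl (\<lambda>w. cA (h w))" "hl (\<lambda>w. cB (h w))" "hl (\<lambda>w. cC (h w))" "hl (\<lambda>w. cD (h w))"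
  unfolding cA_def cB_def cC_def cD_def
  by (intro hl_add hl_diff hl_mult hl_minus hl_const assms)+

definition colE :: "nat \<Rightarrow> complex^4 \<Rightarrow> complex^4 \<Rightarrow> complex" where
  "colE i x N = (if i = 0 then cA x * cC N - cC x * cA N else if i = 1 then cA x * cD N - cC x * cB N
     else if i = 2 then cB x * cC N - cD x * cA N else cB x * cD N - cD x * cB N)"

definition rowE :: "nat \<Rightarrow> complex^4 \<Rightarrow> complex^4 \<Rightarrow> complex" where
  "rowE i x N = (if i = 0 then cA x * cB N - cB x * cA N else if i = 1 then cA x * cD N - cB x * cC N
     else if i = 2 then cC x * cB N - cD x * cA N else cC x * cD N - cD x * cC N)"

theorem mainTheorem10:
  fixes \<Gamma> :: "complex^4 \<Rightarrow> complex^4"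
  assumes "hom_poly_map \<Gamma>"
    and "\<And>x. x \<in> asym_cone \<Longrightarrow> cbil x (\<Gamma> x) = 0"
    and "\<And>x. x \<in> asym_cone \<Longrightarrow> cbil (\<Gamma> x) (\<Gamma> x) = 0"
  shows "\<exists>\<F>. generating_family \<F> \<and>
           (\<forall>x\<in>asym_cone. x \<noteq> 0 \<longrightarrow> (\<forall>P\<in>\<F>. x \<in> P \<longrightarrow> \<Gamma> x \<in> P))"
proof -
  obtain d where hd: "\<And>i. hom_poly_fun d (\<lambda>x. \<Gamma> x $ i)"
    using assms(1) unfolding hom_poly_map_def by blast
  have hG: "hl (\<lambda>w. \<Gamma> (phi w) $ k)" for k
    by (rule hl_poly[OF hd hl_phi])
  note hP = hl_coords[OF hl_phi] and hGc = hl_coords[OF hG]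
  define F where "F i w = colE i (phi w) (\<Gamma> (phi w))" for i w
  define G where "G i w = rowE i (phi w) (\<Gamma> (phi w))" for i w
  have hF: "hl (F i)" for i
    unfolding F_def colE_def by (intro hl_if hl_diff hl_mult hP hGc)
  have hGG: "hl (G i)" for i
    unfolding G_def rowE_def by (intro hl_if hl_diff hl_mult hP hGc)
  have ptw: "(\<forall>i\<in>{0..<4::nat}. colE i x (\<Gamma> x) = 0) \<or> (\<forall>j\<in>{0..<4::nat}. rowE j x (\<Gamma> x) = 0)"
    if xC: "x \<in> asym_cone" for x
  proof -
    have h1: "cA x * cD x = cB x * cC x" using xC cone_iff by blast
    have h2: "cA (\<Gamma> x) * cD (\<Gamma> x) = cB (\<Gamma> x) * cC (\<Gamma> x)"
    proof -
      have "(cA (\<Gamma> x) * cD (\<Gamma> x) + cD (\<Gamma> x) * cA (\<Gamma> x) - cB (\<Gamma> x) * cC (\<Gamma> x) - cC (\<Gamma> x) * cB (\<Gamma> x))/2 = 0"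
        using assms(3)[OF xC] by (simp add: cbil_coords) (metis mult.commute)
      then show ?thesis by (simp add: field_simps)
    qed
    have h3: "cA x * cD (\<Gamma> x) + cD x * cA (\<Gamma> x) - cB x * cC (\<Gamma> x) - cC x * cB (\<Gamma> x) = 0"
      using assms(2)[OF xC] by (simp add: cbil_coords)
    have "{0..<4::nat} = {0,1,2,3}" by auto
    then show ?thesis using pw[OF h1 h2 h3] by (simp add: colE_def rowE_def)
  qed
  have "(\<forall>i\<in>{0..<4::nat}. \<forall>w. F i w = 0) \<or> (\<forall>j\<in>{0..<4::nat}. \<forall>w. G j w = 0)"
    using zero_or_idx[of "{0..<4::nat}" F "{0..<4::nat}" G] hF hGG ptw[OF phi_cone] unfolding F_def G_def
    by blast
  then show ?thesis
  proof
    assume h: "\<forall>i\<in>{0..<4::nat}. \<forall>w. F i w = 0"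
    have col: "cA x * cC (\<Gamma> x) = cC x * cA (\<Gamma> x) \<and> cA x * cD (\<Gamma> x) = cC x * cB (\<Gamma> x)
               \<and> cB x * cC (\<Gamma> x) = cD x * cA (\<Gamma> x) \<and> cB x * cD (\<Gamma> x) = cD x * cB (\<Gamma> x)"
      if xC: "x \<in> asym_cone" for x
    proof -
      obtain w where w: "phi w = x" using phi_surj xC by blast
      have "F 0 w = 0" "F 1 w = 0" "F 2 w = 0" "F 3 w = 0" using h by auto
      then show ?thesis unfolding F_def colE_def w by simp
    qed
    show ?thesis
      by (rule family_from_col[of cA cB cC cD xm \<Gamma>]) (use c_lin xm_coords c_inj cone_iff col in auto)
  next
    assume h: "\<forall>j\<in>{0..<4::nat}. \<forall>w. G j w = 0"
    have row: "cA x * cB (\<Gamma> x) = cB x * cA (\<Gamma> x) \<and> cA x * cD (\<Gamma> x) = cB x * cC (\<Gamma> x)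
               \<and> cC x * cB (\<Gamma> x) = cD x * cA (\<Gamma> x) \<and> cC x * cD (\<Gamma> x) = cD x * cC (\<Gamma> x)"
      if xC: "x \<in> asym_cone" for x
    proof -
      obtain w where w: "phi w = x" using phi_surj xC by blast
      have "G 0 w = 0" "G 1 w = 0" "G 2 w = 0" "G 3 w = 0" using h by auto
      then show ?thesis unfolding G_def rowE_def w by simp
    qed
    have cone': "x \<in> asym_cone \<longleftrightarrow> cA x * cD x = cC x * cB x" for x
      using cone_iff[of x] by (simp add: mult.commute)
    show ?thesis
      by (rule family_from_col[of cA cC cB cD "\<lambda>a b c d. xm a c b d" \<Gamma>])
         (use c_lin xm_coords c_inj cone' row in auto)
  qed
qed

end
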